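(* Let $A=[a_{ij}]\in\mathcal{M}_3(\mathbb{H})$ be a strictly upper triangular (hence nilpotent) matrix. Then $W(A)$ is convex if and only if $a_{13}^*a_{12}a_{23}\in\mathbb{R}$.
   Context: $\mathbb{H}$ denotes the real quaternions with conjugation $q\mapsto q^*$, and $\mathbb{R}\subset\mathbb{H}$ as the real multiples of $1$. The numerical range of $A\in\mathcal{M}_n(\mathbb{H})$ is $W(A)=\{\mathbf{x}^*A\mathbf{x}:\mathbf{x}\in\mathbb{H}^n,\ \mathbf{x}^*\mathbf{x}=1\}$, with $\mathbf{x}^*$ the conjugate transpose. *)

theory Defs
  imports "HOL-Analysis.Analysis"
begin

codatatype quat = Quat (Re: real) (Im1: real) (Im2: real) (Im3: real)

lemma quat_eqI [intro?]:
  "\<lbrakk>Re x = Re y; Im1 x = Im1 y; Im2 x = Im2 y; Im3 x = Im3 y\<rbrakk> \<Longrightarrow> x = y"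
  by (cases x, cases y) simp

lemma quat_eq_iff: "x = y \<longleftrightarrow> Re x = Re y \<and> Im1 x = Im1 y \<and> Im2 x = Im2 y \<and> Im3 x = Im3 y"
  by (auto intro: quat_eqI)

instantiation quat :: ab_group_add
begin
primcorec zero_quat where "Re 0 = 0" | "Im1 0 = 0" | "Im2 0 = 0" | "Im3 0 = 0"
primcorec plus_quat where
  "Re (x + y) = Re x + Re y" | "Im1 (x + y) = Im1 x + Im1 y"
| "Im2 (x + y) = Im2 x + Im2 y" | "Im3 (x + y) = Im3 x + Im3 y"
primcorec uminus_quat where
  "Re (- x) = - Re x" | "Im1 (- x) = - Im1 x" | "Im2 (- x) = - Im2 x" | "Im3 (- x) = - Im3 x"
primcorec minus_quat where
  "Re (x - y) = Re x - Re y" | "Im1 (x - y) = Im1 x - Im1 y"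
| "Im2 (x - y) = Im2 x - Im2 y" | "Im3 (x - y) = Im3 x - Im3 y"
instance by standard (simp_all add: quat_eq_iff)
end

instantiation quat :: ring_1
begin
primcorec one_quat where "Re 1 = 1" | "Im1 1 = 0" | "Im2 1 = 0" | "Im3 1 = 0"
primcorec times_quat where
  "Re (x * y) = Re x * Re y - Im1 x * Im1 y - Im2 x * Im2 y - Im3 x * Im3 y"
| "Im1 (x * y) = Re x * Im1 y + Im1 x * Re y + Im2 x * Im3 y - Im3 x * Im2 y"
| "Im2 (x * y) = Re x * Im2 y - Im1 x * Im3 y + Im2 x * Re y + Im3 x * Im1 y"
| "Im3 (x * y) = Re x * Im3 y + Im1 x * Im2 y - Im2 x * Im1 y + Im3 x * Re y"
instance by standard (simp_all add: quat_eq_iff algebra_simps)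
end

instantiation quat :: real_algebra_1
begin
primcorec scaleR_quat where
  "Re (scaleR r x) = r * Re x" | "Im1 (scaleR r x) = r * Im1 x"
| "Im2 (scaleR r x) = r * Im2 x" | "Im3 (scaleR r x) = r * Im3 x"
instance by standard (simp_all add: quat_eq_iff algebra_simps)
end

primcorec qcnj :: "quat \<Rightarrow> quat" where
  "Re (qcnj x) = Re x" | "Im1 (qcnj x) = - Im1 x" | "Im2 (qcnj x) = - Im2 x" | "Im3 (qcnj x) = - Im3 x"

text \<open>A matrix in \<open>M_3(H)\<close> is represented as \<open>A :: nat \<Rightarrow> nat \<Rightarrow> quat\<close>,
  with entries \<open>A i j\<close> for \<open>i, j \<in> {1..3}\<close> (other values are irrelevant);
  vectors in \<open>H^3\<close> as \<open>x :: nat \<Rightarrow> quat\<close> with components \<open>x i\<close>, \<open>i \<in> {1..3}\<close>.\<close>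

definition numrange3 :: "(nat \<Rightarrow> nat \<Rightarrow> quat) \<Rightarrow> quat set" where
  "numrange3 A = {(\<Sum>i\<in>{1..3}. \<Sum>j\<in>{1..3}. qcnj (x i) * A i j * x j) | x.
      (\<Sum>i\<in>{1..3}. qcnj (x i) * x i) = 1}"

definition strictly_upper_triangular3 :: "(nat \<Rightarrow> nat \<Rightarrow> quat) \<Rightarrow> bool" where
  "strictly_upper_triangular3 A \<longleftrightarrow> (\<forall>i\<in>{1..3}. \<forall>j\<in>{1..3}. j \<le> i \<longrightarrow> A i j = 0)"

end

theory Submission
  imports Defs
begin

lemma quat_of_real_simps[simp]:
  "Re (of_real r) = r" "Im1 (of_real r) = 0" "Im2 (of_real r) = 0" "Im3 (of_real r) = 0"
  by (simp_all add: of_real_def)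

lemma qcnj_mult: "qcnj (a * b) = qcnj b * qcnj a"
  by (simp add: quat_eq_iff algebra_simps)
lemma qcnj_add: "qcnj (a + b) = qcnj a + qcnj b"
  by (simp add: quat_eq_iff)
lemma qcnj_qcnj[simp]: "qcnj (qcnj a) = a"
  by (simp add: quat_eq_iff)
lemma qcnj_of_real[simp]: "qcnj (of_real r) = of_real r"
  by (simp add: quat_eq_iff)

definition qn :: "quat \<Rightarrow> real" where "qn q = (Re q)^2 + (Im1 q)^2 + (Im2 q)^2 + (Im3 q)^2"

lemma qcnj_mult_self: "qcnj q * q = of_real (qn q)"
  by (simp add: quat_eq_iff qn_def power2_eq_square algebra_simps)
lemma mult_qcnj_self: "q * qcnj q = of_real (qn q)"
  by (simp add: quat_eq_iff qn_def power2_eq_square algebra_simps)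
lemma qn_nonneg: "qn q \<ge> 0" by (simp add: qn_def)
lemma qn_zero_iff: "qn q = 0 \<longleftrightarrow> q = 0"
  by (auto simp: qn_def quat_eq_iff add_nonneg_eq_0_iff)
lemma of_real_comm: "of_real r * q = q * (of_real r :: quat)"
  by (simp add: quat_eq_iff)
lemma of_real_mult_quat: "(of_real r :: quat) * q = r *\<^sub>R q"
  by (simp add: quat_eq_iff)

lemma quat_Reals_iff: "(q::quat) \<in> \<real> \<longleftrightarrow> Im1 q = 0 \<and> Im2 q = 0 \<and> Im3 q = 0"
proof
  assume "q \<in> \<real>" then show "Im1 q = 0 \<and> Im2 q = 0 \<and> Im3 q = 0" by (auto elim: Reals_cases)
next
  assume "Im1 q = 0 \<and> Im2 q = 0 \<and> Im3 q = 0"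
  then have "q = of_real (Re q)" by (simp add: quat_eq_iff)
  then show "q \<in> \<real>" by (metis Reals_of_real)
qed

lemma qmult_right_cancel: assumes "x \<noteq> 0" "a * x = b * x" shows "a = (b::quat)"
proof -
  have "a * x * qcnj x = b * x * qcnj x" using assms by simp
  then have "a * of_real (qn x) = b * of_real (qn x)" by (simp add: mult.assoc mult_qcnj_self)
  then have "qn x *\<^sub>R a = qn x *\<^sub>R b" by (simp add: of_real_comm[symmetric] of_real_mult_quat)
  moreover have "qn x \<noteq> 0" using assms qn_zero_iff by auto
  ultimately show ?thesis by simp
qed

definition Q3 :: "quat \<Rightarrow> quat \<Rightarrow> quat \<Rightarrow> quat \<Rightarrow> quat \<Rightarrow> quat \<Rightarrow> quat" where
  "Q3 a b c x y z = qcnj x * a * y + qcnj x * b * z + qcnj y * c * z"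

definition Wq :: "quat \<Rightarrow> quat \<Rightarrow> quat \<Rightarrow> quat set" where
  "Wq a b c = {Q3 a b c x y z | x y z. qn x + qn y + qn z = 1}"

lemma numrange3_Wq:
  assumes "strictly_upper_triangular3 A"
  shows "numrange3 A = Wq (A 1 2) (A 1 3) (A 2 3)"
proof -
  have e: "{1..3::nat} = {1,2,3}" by auto
  have z: "A 1 1 = 0" "A 2 1 = 0" "A 2 2 = 0" "A 3 1 = 0" "A 3 2 = 0" "A 3 3 = 0"
    using assms unfolding strictly_upper_triangular3_def by auto
  have n: "\<And>x. (\<Sum>i\<in>{1..3::nat}. qcnj (x i) * x i) = of_real (qn (x 1) + qn (x 2) + qn (x 3))"
    unfolding e by (simp add: qcnj_mult_self)
  have v: "\<And>x. (\<Sum>i\<in>{1..3::nat}. \<Sum>j\<in>{1..3::nat}. qcnj (x i) * A i j * x j)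
      = Q3 (A 1 2) (A 1 3) (A 2 3) (x 1) (x 2) (x 3)"
    unfolding e using z by (simp add: Q3_def)
  have u: "\<And>r. (of_real r :: quat) = 1 \<longleftrightarrow> r = 1"
    by (metis of_real_1 of_real_eq_iff)
  show ?thesis
    unfolding numrange3_def Wq_def n v u
  proof (intro set_eqI iffI)
    fix w assume "w \<in> {Q3 (A 1 2) (A 1 3) (A 2 3) (x 1) (x (2::nat)) (x (3::nat)) |x. qn (x 1) + qn (x (2::nat)) + qn (x (3::nat)) = 1}"
    then obtain x where "w = Q3 (A 1 2) (A 1 3) (A 2 3) (x 1) (x (2::nat)) (x (3::nat))" "qn (x 1) + qn (x (2::nat)) + qn (x (3::nat)) = 1" by blast
    then show "w \<in> {Q3 (A 1 2) (A 1 3) (A 2 3) x y z |x y z. qn x + qn y + qn z = 1}" by blast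
  next
    fix w assume "w \<in> {Q3 (A 1 2) (A 1 3) (A 2 3) x y z |x y z. qn x + qn y + qn z = 1}"
    then obtain x y z where h: "w = Q3 (A 1 2) (A 1 3) (A 2 3) x y z" "qn x + qn y + qn z = 1" by blast
    define f where "f = (\<lambda>i::nat. if i = 1 then x else if i = 2 then y else z)"
    have "w = Q3 (A 1 2) (A 1 3) (A 2 3) (f 1) (f (2::nat)) (f (3::nat)) \<and> qn (f 1) + qn (f (2::nat)) + qn (f (3::nat)) = 1"
      using h by (simp add: f_def)
    then show "w \<in> {Q3 (A 1 2) (A 1 3) (A 2 3) (x 1) (x (2::nat)) (x (3::nat)) |x. qn (x 1) + qn (x (2::nat)) + qn (x (3::nat)) = 1}"
      by blast
  qed
qed

lemma qn_scaleR: "qn (s *\<^sub>R q) = s^2 * qn q"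
  by (simp add: qn_def power_mult_distrib algebra_simps)

lemma qcnj_scaleR: "qcnj (s *\<^sub>R q) = s *\<^sub>R qcnj q"
  by (simp add: quat_eq_iff)

lemma qn_qcnj[simp]: "qn (qcnj q) = qn q" by (simp add: qn_def)

lemma Q3_scaleR: "Q3 a b c (s *\<^sub>R x) (s *\<^sub>R y) (s *\<^sub>R z) = (s^2) *\<^sub>R Q3 a b c x y z"
  by (simp add: Q3_def qcnj_scaleR power2_eq_square scaleR_add_right)

lemma Wq_homog:
  assumes "qn x + qn y + qn z > 0" "Q3 a b c x y z = of_real (qn x + qn y + qn z) * w"
  shows "w \<in> Wq a b c"
proof -
  define N where "N = qn x + qn y + qn z"
  define k where "k = 1 / sqrt N"
  have N: "N > 0" using assms N_def by auto
  have k2: "k^2 * N = 1" using N by (simp add: k_def power_divide)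
  have "qn (k *\<^sub>R x) + qn (k *\<^sub>R y) + qn (k *\<^sub>R z) = 1"
    using k2 by (simp add: qn_scaleR N_def algebra_simps)
  moreover have "Q3 a b c (k *\<^sub>R x) (k *\<^sub>R y) (k *\<^sub>R z) = w"
    using assms(2) k2 by (simp add: Q3_scaleR of_real_mult_quat N_def[symmetric])
  ultimately show ?thesis unfolding Wq_def by blast
qed

lemma qn_mult: "qn (x * y) = qn x * qn y"
  by (simp add: qn_def power2_eq_square algebra_simps)

lemma Q3_rmult: "Q3 a b c (x * q) (y * q) (z * q) = qcnj q * Q3 a b c x y z * q"
  by (simp add: Q3_def qcnj_mult algebra_simps)

lemma Q3_lmult: "Q3 a b c (d1 * x) (d2 * y) (d3 * z) =
   Q3 (qcnj d1 * a * d2) (qcnj d1 * b * d3) (qcnj d2 * c * d3) x y z"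
  by (simp add: Q3_def qcnj_mult mult.assoc)

lemma Wq_rot:
  assumes "w \<in> Wq a b c" "q \<noteq> 0" "qcnj q * w * q = of_real (qn q) * w'"
  shows "w' \<in> Wq a b c"
proof -
  obtain x y z where h: "w = Q3 a b c x y z" "qn x + qn y + qn z = 1" using assms(1) unfolding Wq_def by blast
  have qp: "qn q > 0" using assms(2) qn_nonneg qn_zero_iff by (metis less_eq_real_def)
  have "qn (x*q) + qn (y*q) + qn (z*q) = (qn x + qn y + qn z) * qn q" by (simp add: qn_mult algebra_simps)
  then have "qn (x*q) + qn (y*q) + qn (z*q) = qn q" using h by simp
  moreover have "Q3 a b c (x*q) (y*q) (z*q) = of_real (qn q) * w'" using h assms(3) by (simp add: Q3_rmult)
  ultimately show ?thesis using Wq_homog qp by metis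
qed

lemma Wq_diag:
  assumes "qn d1 = 1" "qn d2 = 1" "qn d3 = 1"
  shows "Wq a b c = Wq (qcnj d1 * a * d2) (qcnj d1 * b * d3) (qcnj d2 * c * d3)" (is "?L = ?R")
proof
  show "?R \<subseteq> ?L"
  proof
    fix w assume "w \<in> ?R"
    then obtain x y z where h: "w = Q3 (qcnj d1 * a * d2) (qcnj d1 * b * d3) (qcnj d2 * c * d3) x y z" "qn x + qn y + qn z = 1" unfolding Wq_def by blast
    have "w = Q3 a b c (d1 * x) (d2 * y) (d3 * z)" using h by (simp add: Q3_lmult)
    moreover have "qn (d1 * x) + qn (d2*y) + qn (d3 * z) = 1" using h assms by (simp add: qn_mult)
    ultimately show "w \<in> ?L" unfolding Wq_def by blast
  qed
next
  show "?L \<subseteq> ?R"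
  proof
    fix w assume "w \<in> ?L"
    then obtain x y z where h: "w = Q3 a b c x y z" "qn x + qn y + qn z = 1" unfolding Wq_def by blast
    have i: "\<And>d. qn d = 1 \<Longrightarrow> d * (qcnj d * x) = x" "\<And>d. qn d = 1 \<Longrightarrow> d * (qcnj d * y) = y" "\<And>d. qn d = 1 \<Longrightarrow> d * (qcnj d * z) = z"
      by (simp_all add: mult.assoc[symmetric] mult_qcnj_self)
    have "w = Q3 a b c (d1 * (qcnj d1 * x)) (d2 * (qcnj d2 * y)) (d3 * (qcnj d3 * z))" using h assms i by simp
    then have "w = Q3 (qcnj d1 * a * d2) (qcnj d1 * b * d3) (qcnj d2 * c * d3) (qcnj d1 * x) (qcnj d2 * y) (qcnj d3 * z)"
      by (simp add: Q3_lmult)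
    moreover have "qn (qcnj d1 * x) + qn (qcnj d2*y) + qn (qcnj d3 * z) = 1" using h assms
      by (simp add: qn_mult qn_qcnj)
    ultimately show "w \<in> ?R" unfolding Wq_def by blast
  qed
qed

definition QC :: "complex \<Rightarrow> complex \<Rightarrow> complex \<Rightarrow> complex \<Rightarrow> complex \<Rightarrow> complex \<Rightarrow> complex" where
  "QC a b c x y z = cnj x * a * y + cnj x * b * z + cnj y * c * z"
definition NC :: "complex \<Rightarrow> complex \<Rightarrow> complex \<Rightarrow> complex" where
  "NC x y z = cnj x * x + cnj y * y + cnj z * z"
definition WC :: "complex \<Rightarrow> complex \<Rightarrow> complex \<Rightarrow> complex set" where
  "WC a b c = {QC a b c x y z | x y z. NC x y z = 1}"
definition BC :: "complex \<Rightarrow> complex \<Rightarrow> complex \<Rightarrow> complex \<Rightarrow> complex \<Rightarrow> complex \<Rightarrow> complex \<Rightarrow> complex \<Rightarrow> complex \<Rightarrow> complex" where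
  "BC a b c x1 x2 x3 y1 y2 y3 = cnj x1 * a * y2 + cnj x1 * b * y3 + cnj x2 * c * y3"
definition IPC :: "complex \<Rightarrow> complex \<Rightarrow> complex \<Rightarrow> complex \<Rightarrow> complex \<Rightarrow> complex \<Rightarrow> complex" where
  "IPC x1 x2 x3 y1 y2 y3 = cnj x1 * y1 + cnj x2 * y2 + cnj x3 * y3"

lemma QC_comb: "QC a b c (\<alpha>*x1+\<beta>*y1) (\<alpha>*x2+\<beta>*y2) (\<alpha>*x3+\<beta>*y3) =
  cnj \<alpha> * \<alpha> * QC a b c x1 x2 x3 + cnj \<beta> * \<beta> * QC a b c y1 y2 y3
  + cnj \<alpha> * \<beta> * BC a b c x1 x2 x3 y1 y2 y3 + cnj \<beta> * \<alpha> * BC a b c y1 y2 y3 x1 x2 x3"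
  by (simp add: QC_def BC_def algebra_simps)

lemma NC_comb: "NC (\<alpha>*x1+\<beta>*y1) (\<alpha>*x2+\<beta>*y2) (\<alpha>*x3+\<beta>*y3) =
  cnj \<alpha> * \<alpha> * NC x1 x2 x3 + cnj \<beta> * \<beta> * NC y1 y2 y3
  + cnj \<alpha> * \<beta> * IPC x1 x2 x3 y1 y2 y3 + cnj \<beta> * \<alpha> * IPC y1 y2 y3 x1 x2 x3"
  by (simp add: NC_def IPC_def algebra_simps)

lemma QC_scale: "QC a b c (k * x1) (k * x2) (k * x3) = cnj k * k * QC a b c x1 x2 x3"
  by (simp add: QC_def algebra_simps)
lemma NC_scale: "NC (k * x1) (k * x2) (k * x3) = cnj k * k * NC x1 x2 x3"
  by (simp add: NC_def algebra_simps)

lemma cnj_mult_self: "cnj z * z = of_real ((cmod z)^2)"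
  using complex_norm_square[of z] by (simp add: mult.commute)

lemma NC_real: "NC x y z = of_real ((cmod x)^2 + (cmod y)^2 + (cmod z)^2)"
  by (simp add: NC_def cnj_mult_self)

lemma NC_zero: "(cmod x)^2 + (cmod y)^2 + (cmod z)^2 = 0 \<Longrightarrow> x = 0 \<and> y = 0 \<and> z = 0"
  by (simp add: add_nonneg_eq_0_iff)

lemma WC_homog:
  assumes "N > 0" "NC x y z = of_real N" "QC a b c x y z = of_real N * w"
  shows "w \<in> WC a b c"
proof -
  define k where "k = complex_of_real (1 / sqrt N)"
  have kk: "cnj k * k * of_real N = 1" using assms(1)
    by (simp add: k_def power_divide flip: of_real_mult)
  have "NC (k * x) (k * y) (k * z) = 1" using kk assms by (simp add: NC_scale)
  moreover have "QC a b c (k * x) (k * y) (k * z) = w" using kk assms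
    by (simp add: QC_scale mult.assoc[symmetric])
  ultimately show ?thesis unfolding WC_def by blast
qed

lemma WC_convex: "convex (WC a b c)"
  unfolding convex_def
proof (intro ballI allI impI)
  fix w1 w2 and u v :: real
  assume w1: "w1 \<in> WC a b c" and w2: "w2 \<in> WC a b c" and uv: "0 \<le> u" "0 \<le> v" "u + v = 1"
  obtain x1 x2 x3 where hx: "w1 = QC a b c x1 x2 x3" "NC x1 x2 x3 = 1" using w1 unfolding WC_def by blast
  obtain y1 y2 y3 where hy: "w2 = QC a b c y1 y2 y3" "NC y1 y2 y3 = 1" using w2 unfolding WC_def by blast
  show "u *\<^sub>R w1 + v *\<^sub>R w2 \<in> WC a b c"
  proof (cases "w1 = w2")
    case True
    then have "u *\<^sub>R w1 + v *\<^sub>R w2 = w1" using uv by (metis scaleR_add_left scaleR_one)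
    then show ?thesis using w1 by simp
  next
    case False
    define \<delta> where "\<delta> = w2 - w1"
    have d0: "\<delta> \<noteq> 0" using False by (simp add: \<delta>_def)
    define P0 where "P0 = BC a b c x1 x2 x3 y1 y2 y3 - IPC x1 x2 x3 y1 y2 y3 * w1"
    define Q0 where "Q0 = BC a b c y1 y2 y3 x1 x2 x3 - IPC y1 y2 y3 x1 x2 x3 * w1"
    define p where "p = P0 / \<delta>"
    define q where "q = Q0 / \<delta>"
    define m where "m = p - cnj q"
    define \<mu> where "\<mu> = (if m = 0 then 1 else m / of_real (cmod m))"
    have \<mu>n: "cnj \<mu> * \<mu> = 1"
    proof (cases "m = 0")
      case True then show ?thesis by (simp add: \<mu>_def)
    next
      case False
      then have "cnj \<mu> * \<mu> = cnj m * m / of_real ((cmod m)^2)" by (simp add: \<mu>_def power2_eq_square)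
      then show ?thesis using False by (simp add: cnj_mult_self)
    qed
    define \<rho> where "\<rho> = cnj \<mu> * p + \<mu> * q"
    have \<rho>r: "Im \<rho> = 0"
    proof (cases "m = 0")
      case True
      then have "p = cnj q" by (simp add: m_def)
      then show ?thesis by (simp add: \<rho>_def \<mu>_def True)
    next
      case False
      have "cnj m * p + m * q = cnj p * p - cnj q * q" by (simp add: m_def algebra_simps)
      then have "Im (cnj m * p + m * q) = 0" by (simp add: cnj_mult_self)
      moreover have "\<rho> = (cnj m * p + m * q) / of_real (cmod m)" using False
        by (simp add: \<rho>_def \<mu>_def add_divide_distrib)
      ultimately show ?thesis by (simp add: Im_divide_of_real)
    qed
    define kp where "kp = cnj \<mu> * IPC x1 x2 x3 y1 y2 y3 + \<mu> * IPC y1 y2 y3 x1 x2 x3"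
    define Z where "Z = (\<lambda>(s::real) (xk::complex) (yk::complex). of_real (1-s) * \<mu> * xk + of_real s * yk)"
    have NZ: "NC (Z s x1 y1) (Z s x2 y2) (Z s x3 y3) = of_real ((1-s)^2 + s^2) + of_real ((1-s) * s) * kp" for s
    proof -
      have "NC (Z s x1 y1) (Z s x2 y2) (Z s x3 y3) =
         NC ((of_real (1-s) * \<mu>) * x1 + of_real s * y1) ((of_real (1-s) * \<mu>) * x2 + of_real s * y2) ((of_real (1-s) * \<mu>) * x3 + of_real s * y3)"
        by (simp add: Z_def)
      also have "\<dots> = of_real ((1-s)^2) * (cnj \<mu> * \<mu>) * NC x1 x2 x3 + of_real (s^2) * NC y1 y2 y3
         + of_real ((1-s) * s) * kp"
        unfolding NC_comb kp_def by (simp add: algebra_simps power2_eq_square)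
      finally show ?thesis using \<mu>n hx hy by simp
    qed
    have QZ: "QC a b c (Z s x1 y1) (Z s x2 y2) (Z s x3 y3) - NC (Z s x1 y1) (Z s x2 y2) (Z s x3 y3) * w1
       = \<delta> * (of_real (s^2) + of_real ((1-s) * s) * \<rho>)" for s
    proof -
      have "QC a b c (Z s x1 y1) (Z s x2 y2) (Z s x3 y3) =
         QC a b c ((of_real (1-s) * \<mu>) * x1 + of_real s * y1) ((of_real (1-s) * \<mu>) * x2 + of_real s * y2) ((of_real (1-s) * \<mu>) * x3 + of_real s * y3)"
        by (simp add: Z_def)
      also have "\<dots> = of_real ((1-s)^2) * (cnj \<mu> * \<mu>) * w1 + of_real (s^2) * w2
         + of_real ((1-s) * s) * (cnj \<mu> * BC a b c x1 x2 x3 y1 y2 y3 + \<mu> * BC a b c y1 y2 y3 x1 x2 x3)"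
        unfolding QC_comb hx hy by (simp add: algebra_simps power2_eq_square)
      finally have A: "QC a b c (Z s x1 y1) (Z s x2 y2) (Z s x3 y3) = of_real ((1-s)^2) * w1 + of_real (s^2) * w2
         + of_real ((1-s) * s) * (cnj \<mu> * BC a b c x1 x2 x3 y1 y2 y3 + \<mu> * BC a b c y1 y2 y3 x1 x2 x3)"
        using \<mu>n by simp
      have B: "\<delta> * \<rho> = cnj \<mu> * P0 + \<mu> * Q0" using d0 by (simp add: \<rho>_def p_def q_def field_simps)
      have C: "\<delta> * (of_real (s^2) + of_real ((1-s) * s) * \<rho>) = \<delta> * of_real (s^2) + of_real ((1-s) * s) * (cnj \<mu> * P0 + \<mu> * Q0)"
        unfolding B[symmetric] by (simp add: algebra_simps)
      show ?thesis unfolding A NZ C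
        by (simp add: P0_def Q0_def kp_def \<delta>_def algebra_simps power2_eq_square)
    qed
    define g where "g = (\<lambda>s::real. s^2 + (1-s) * s * Complex.Re \<rho> - v * ((1-s)^2 + s^2 + (1-s) * s * Complex.Re kp))"
    have "g 0 \<le> 0" "0 \<le> g 1" using uv by (simp_all add: g_def)
    moreover have "continuous_on {0..1} g" unfolding g_def by (intro continuous_intros)
    ultimately obtain s where s: "0 \<le> s" "s \<le> 1" "g s = 0" using IVT'[of g 0 0 1] by auto
    define N where "N = (1-s)^2 + s^2 + (1-s) * s * Complex.Re kp"
    have NCr: "NC (Z s x1 y1) (Z s x2 y2) (Z s x3 y3) = of_real N"
    proof -
      have "Im (NC (Z s x1 y1) (Z s x2 y2) (Z s x3 y3)) = 0" by (simp add: NC_real)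
      then show ?thesis unfolding N_def NZ by (simp add: complex_eq_iff)
    qed
    have N0: "N \<ge> 0" using NCr NC_real
      by (metis add_nonneg_nonneg of_real_eq_iff zero_le_power2)
    have QZ2: "QC a b c (Z s x1 y1) (Z s x2 y2) (Z s x3 y3) = of_real N * (u *\<^sub>R w1 + v *\<^sub>R w2)"
    proof -
      have r: "\<rho> = of_real (Complex.Re \<rho>)" using \<rho>r by (simp add: complex_eq_iff)
      have gs: "s^2 + (1-s) * s * Complex.Re \<rho> = v * N" using s(3) by (simp add: g_def N_def)
      have "QC a b c (Z s x1 y1) (Z s x2 y2) (Z s x3 y3) = of_real N * w1 + \<delta> * of_real (s^2 + (1-s) * s * Complex.Re \<rho>)"
        using QZ[of s] NCr r by (simp add: algebra_simps)
      also have "\<dots> = of_real N * (u *\<^sub>R w1 + v *\<^sub>R w2)"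
        unfolding gs \<delta>_def using uv by (simp add: scaleR_conv_of_real algebra_simps flip: distrib_left of_real_add)
      finally show ?thesis .
    qed
    have Npos: "N > 0"
    proof (rule ccontr)
      assume "\<not> N > 0"
      then have "N = 0" using N0 by simp
      then have "(cmod (Z s x1 y1))^2 + (cmod (Z s x2 y2))^2 + (cmod (Z s x3 y3))^2 = 0"
        using NCr NC_real by (metis of_real_0 of_real_eq_iff)
      then have z: "Z s x1 y1 = 0" "Z s x2 y2 = 0" "Z s x3 y3 = 0" using NC_zero by blast+
      have \<mu>0: "\<mu> \<noteq> 0" using \<mu>n by auto
      show False
      proof (cases "s = 0")
        case True
        then have "x1 = 0" "x2 = 0" "x3 = 0" using z \<mu>0 by (simp_all add: Z_def)
        then show False using hx by (simp add: NC_def)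
      next
        case False
        define k where "k = - of_real (1-s) * \<mu> / of_real s"
        have yk: "y1 = k * x1" "y2 = k * x2" "y3 = k * x3" using z False
          by (simp_all add: Z_def k_def field_simps add_eq_0_iff2)
        have "cnj k * k = 1" using hx hy NC_scale[of k x1 x2 x3] yk by simp
        then have "w2 = w1" using hx hy QC_scale[of a b c k x1 x2 x3] yk by simp
        then show False using \<open>w1 \<noteq> w2\<close> by simp
      qed
    qed
    show ?thesis using WC_homog[OF Npos NCr QZ2] .
  qed
qed

definition ce :: "complex \<Rightarrow> quat" where "ce z = Quat (Complex.Re z) (Im z) 0 0"
definition imn :: "quat \<Rightarrow> real" where "imn w = sqrt ((Im1 w)^2 + (Im2 w)^2 + (Im3 w)^2)"
definition Sset :: "complex set \<Rightarrow> quat set" where "Sset C = {w. Complex (quat.Re w) (imn w) \<in> C}"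

lemma ce_simps[simp]: "quat.Re (ce z) = Complex.Re z" "Im1 (ce z) = Im z" "Im2 (ce z) = 0" "Im3 (ce z) = 0"
  by (simp_all add: ce_def)

definition cu :: "quat \<Rightarrow> complex" where "cu x = Complex (quat.Re x) (Im1 x)"
definition cw :: "quat \<Rightarrow> complex" where "cw x = Complex (Im2 x) (- Im3 x)"

lemma link_Re: "quat.Re (Q3 (of_real a) (of_real b) (of_real c) x y z) =
   Complex.Re (QC (of_real a) (of_real b) (of_real c) (cu x) (cu y) (cu z) + QC (of_real a) (of_real b) (of_real c) (cw x) (cw y) (cw z))"
  by (simp add: Q3_def QC_def cu_def cw_def algebra_simps)
lemma link_Im: "Im1 (Q3 (of_real a) (of_real b) (of_real c) x y z) =
   Complex.Im (QC (of_real a) (of_real b) (of_real c) (cu x) (cu y) (cu z) + QC (of_real a) (of_real b) (of_real c) (cw x) (cw y) (cw z))"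
  by (simp add: Q3_def QC_def cu_def cw_def algebra_simps)
lemma link_N: "NC (cu x) (cu y) (cu z) + NC (cw x) (cw y) (cw z) = of_real (qn x + qn y + qn z)"
  by (simp add: NC_def cu_def cw_def qn_def complex_eq_iff power2_eq_square)

lemma WC_zero_vec: "NC x y z = 0 \<Longrightarrow> QC a b c x y z = 0"
  by (metis NC_real NC_zero QC_scale mult_zero_left mult_zero_right of_real_eq_0_iff)

lemma link1:
  assumes "qn x + qn y + qn z = 1" "Im2 (Q3 (of_real a) (of_real b) (of_real c) x y z) = 0"
    "Im3 (Q3 (of_real a) (of_real b) (of_real c) x y z) = 0"
  shows "Complex (quat.Re (Q3 (of_real a) (of_real b) (of_real c) x y z)) (Im1 (Q3 (of_real a) (of_real b) (of_real c) x y z))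
     \<in> WC (of_real a) (of_real b) (of_real c)"
proof -
  let ?a = "complex_of_real a" and ?b = "complex_of_real b" and ?c = "complex_of_real c"
  define U where "U = QC ?a ?b ?c (cu x) (cu y) (cu z)"
  define V where "V = QC ?a ?b ?c (cw x) (cw y) (cw z)"
  define nu where "nu = (cmod (cu x))^2 + (cmod (cu y))^2 + (cmod (cu z))^2"
  define nv where "nv = (cmod (cw x))^2 + (cmod (cw y))^2 + (cmod (cw z))^2"
  have NU: "NC (cu x) (cu y) (cu z) = of_real nu" by (simp add: NC_real nu_def)
  have NV: "NC (cw x) (cw y) (cw z) = of_real nv" by (simp add: NC_real nv_def)
  have s: "nu + nv = 1" using link_N[of x y z] assms(1) NU NV by (metis of_real_add of_real_eq_1_iff)
  have "Complex (quat.Re (Q3 (of_real a) (of_real b) (of_real c) x y z)) (Im1 (Q3 (of_real a) (of_real b) (of_real c) x y z)) = U + V"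
    by (simp add: link_Re link_Im U_def V_def complex_eq_iff)
  moreover have "U + V \<in> WC ?a ?b ?c"
  proof -
    have nu0: "nu \<ge> 0" "nv \<ge> 0" by (simp_all add: nu_def nv_def)
    show ?thesis
    proof (cases "nu = 0")
      case True
      then have "U = 0" using NU WC_zero_vec U_def by simp
      moreover have "NC (cw x) (cw y) (cw z) = 1" using NV s True by simp
      ultimately show ?thesis by (auto simp: WC_def V_def)
    next
      case F1: False
      show ?thesis
      proof (cases "nv = 0")
        case True
        then have "V = 0" using NV WC_zero_vec V_def by simp
        moreover have "NC (cu x) (cu y) (cu z) = 1" using NU s True by simp
        ultimately show ?thesis by (auto simp: WC_def U_def)
      next
        case False
        have p: "nu > 0" "nv > 0" using nu0 F1 False by auto
        have c1: "U / of_real nu \<in> WC ?a ?b ?c" using WC_homog[OF p(1) NU] p by (simp add: U_def)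
        have c2: "V / of_real nv \<in> WC ?a ?b ?c" using WC_homog[OF p(2) NV] p by (simp add: V_def)
        have "nu *\<^sub>R (U / of_real nu) + nv *\<^sub>R (V / of_real nv) \<in> WC ?a ?b ?c"
          using convexD[OF WC_convex c1 c2] nu0 s by blast
        then show ?thesis using p by (simp add: scaleR_conv_of_real)
      qed
    qed
  qed
  ultimately show ?thesis by simp
qed

lemma link2: "z \<in> WC (of_real a) (of_real b) (of_real c) \<Longrightarrow> ce z \<in> Wq (of_real a) (of_real b) (of_real c)"
proof -
  assume "z \<in> WC (of_real a) (of_real b) (of_real c)"
  then obtain x1 x2 x3 where h: "z = QC (of_real a) (of_real b) (of_real c) x1 x2 x3" "NC x1 x2 x3 = 1"
    unfolding WC_def by blast
  have "ce z = Q3 (of_real a) (of_real b) (of_real c) (ce x1) (ce x2) (ce x3)"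
    using h by (simp add: quat_eq_iff Q3_def QC_def algebra_simps)
  moreover have "qn (ce x1) + qn (ce x2) + qn (ce x3) = 1"
    using h(2) by (simp add: NC_def qn_def complex_eq_iff power2_eq_square)
  ultimately show ?thesis unfolding Wq_def by blast
qed

lemma WC_cnj: "z \<in> WC (of_real a) (of_real b) (of_real c) \<Longrightarrow> cnj z \<in> WC (of_real a) (of_real b) (of_real c)"
proof -
  assume "z \<in> WC (of_real a) (of_real b) (of_real c)"
  then obtain x1 x2 x3 where h: "z = QC (of_real a) (of_real b) (of_real c) x1 x2 x3" "NC x1 x2 x3 = 1"
    unfolding WC_def by blast
  have "cnj z = QC (of_real a) (of_real b) (of_real c) (cnj x1) (cnj x2) (cnj x3)" using h by (simp add: QC_def)
  moreover have "NC (cnj x1) (cnj x2) (cnj x3) = 1" using h(2)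
    by (metis NC_def complex_cnj_add complex_cnj_cnj complex_cnj_mult complex_cnj_one)
  ultimately show ?thesis unfolding WC_def by blast
qed

lemma rotation:
  "\<exists>q s. q \<noteq> 0 \<and> (s = imn w \<or> s = - imn w) \<and> qcnj q * w * q = of_real (qn q) * ce (Complex (quat.Re w) s)"
proof -
  define r where "r = imn w"
  have r0: "r \<ge> 0" by (simp add: r_def imn_def)
  have r2: "r^2 = (Im1 w)^2 + (Im2 w)^2 + (Im3 w)^2" by (simp add: r_def imn_def)
  define q where "q = Quat (r + Im1 w) 0 (- Im3 w) (Im2 w)"
  show ?thesis
  proof (cases "q = 0")
    case True
    then have "Im2 w = 0" "Im3 w = 0" "Im1 w = - r" by (simp_all add: q_def quat_eq_iff)
    then have "qcnj 1 * w * 1 = of_real (qn 1) * ce (Complex (quat.Re w) (- r))"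
      by (simp add: quat_eq_iff qn_def)
    then show ?thesis using r_def by (metis one_neq_zero)
  next
    case False
    have qnq: "qn q = (r + Im1 w)^2 + (Im3 w)^2 + (Im2 w)^2" by (simp add: q_def qn_def)
    have "qcnj q * w * q = of_real (qn q) * ce (Complex (quat.Re w) r)"
    proof -
      define a p1 p2 p3 where "a = quat.Re w" "p1 = Im1 w" "p2 = Im2 w" "p3 = Im3 w"
      have w: "w = Quat a p1 p2 p3" by (simp add: a_p1_p2_p3_def quat_eq_iff)
      have r2': "r^2 = p1^2 + p2^2 + p3^2" using r2 by (simp add: a_p1_p2_p3_def)
      have e1: "(r + p1) * a * (r + p1) + ((r + p1) * p2 + p3 * a - p2 * p1) * p3 - ((r + p1) * p3 - p3 * p1 - p2 * a) * p2
         = ((r + p1)^2 + p3^2 + p2^2) * a" by algebra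
      have e2: "((r + p1) * p1 + p3 * p3 + p2 * p2) * (r + p1) + ((r + p1) * p2 + p3 * a - p2 * p1) * p2 +
          ((r + p1) * p3 - p3 * p1 - p2 * a) * p3 = ((r + p1)^2 + p3^2 + p2^2) * r" using r2' by algebra
      have e3: "- ((r + p1) * a * p3) - ((r + p1) * p1 + p3 * p3 + p2 * p2) * p2 +
          ((r + p1) * p2 + p3 * a - p2 * p1) * (r + p1) = 0" using r2' by algebra
      have e4: "(r + p1) * a * p2 - ((r + p1) * p1 + p3 * p3 + p2 * p2) * p3 +
          ((r + p1) * p3 - p3 * p1 - p2 * a) * (r + p1) = 0" using r2' by algebra
      show ?thesis unfolding of_real_mult_quat quat_eq_iff qnq
        using e1 e2 e3 e4 by (simp add: q_def w)
    qed
    then show ?thesis using False r_def by blast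
  qed
qed

lemma mult_of_real_quat: "(q::quat) * of_real r = r *\<^sub>R q"
  by (simp add: quat_eq_iff)

lemma jrot: "qcnj (Quat 0 0 1 0) * ce (Complex a s) * Quat 0 0 1 0 = of_real (qn (Quat 0 0 1 0)) * ce (Complex a (- s))"
  by (simp add: quat_eq_iff qn_def)

lemma Sset_convex:
  assumes "convex C" "\<And>z. z \<in> C \<Longrightarrow> cnj z \<in> C"
  shows "convex (Sset C)"
  unfolding convex_def
proof (intro ballI allI impI)
  fix w1 w2 and u v :: real
  assume w1: "w1 \<in> Sset C" and w2: "w2 \<in> Sset C" and uv: "0 \<le> u" "0 \<le> v" "u + v = 1"
  define w where "w = u *\<^sub>R w1 + v *\<^sub>R w2"
  define b where "b = u * imn w1 + v * imn w2"
  define a where "a = quat.Re w"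
  have a: "a = u * quat.Re w1 + v * quat.Re w2" by (simp add: a_def w_def)
  have im: "imn x = norm (Im1 x, Im2 x, Im3 x)" for x
    by (simp add: imn_def norm_Pair power2_eq_square add.assoc)
  have "(Im1 w, Im2 w, Im3 w) = u *\<^sub>R (Im1 w1, Im2 w1, Im3 w1) + v *\<^sub>R (Im1 w2, Im2 w2, Im3 w2)"
    by (simp add: w_def)
  then have ib: "imn w \<le> b" unfolding im b_def
    by (metis (no_types, lifting) abs_of_nonneg norm_scaleR norm_triangle_ineq uv(1) uv(2))
  have i0: "imn w \<ge> 0" by (simp add: imn_def)
  have p1: "Complex a b \<in> C"
  proof -
    have "u *\<^sub>R Complex (quat.Re w1) (imn w1) + v *\<^sub>R Complex (quat.Re w2) (imn w2) \<in> C"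
      using convexD[OF assms(1)] w1 w2 uv unfolding Sset_def by blast
    moreover have "u *\<^sub>R Complex (quat.Re w1) (imn w1) + v *\<^sub>R Complex (quat.Re w2) (imn w2) = Complex a b"
      by (simp add: a b_def complex_eq_iff)
    ultimately show ?thesis by simp
  qed
  have p2: "Complex a (- b) \<in> C" using assms(2)[OF p1] by (simp add: complex_cnj)
  have "Complex a (imn w) \<in> C"
  proof (cases "b = 0")
    case True
    then have "imn w = 0" using ib i0 by simp
    then show ?thesis using p1 True by simp
  next
    case False
    then have bp: "b > 0" using ib i0 by simp
    define t where "t = (b + imn w) / (2 * b)"
    have t: "0 \<le> t" "0 \<le> 1 - t" using bp ib i0 by (simp_all add: t_def field_simps)
    have "t *\<^sub>R Complex a b + (1 - t) *\<^sub>R Complex a (- b) \<in> C"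
      using convexD[OF assms(1) p1 p2] t by simp
    moreover have "t *\<^sub>R Complex a b + (1 - t) *\<^sub>R Complex a (- b) = Complex a (imn w)"
      using bp by (simp add: complex_eq_iff t_def field_simps)
    ultimately show ?thesis by simp
  qed
  then show "u *\<^sub>R w1 + v *\<^sub>R w2 \<in> Sset C" unfolding Sset_def a_def w_def by simp
qed

lemma Wq_real_Sset:
  "Wq (of_real a) (of_real b) (of_real c) = Sset (WC (of_real a) (of_real b) (of_real c))" (is "?W = ?S")
proof
  show "?W \<subseteq> ?S"
  proof
    fix w assume w: "w \<in> ?W"
    obtain q s where qs: "q \<noteq> 0" "s = imn w \<or> s = - imn w" "qcnj q * w * q = of_real (qn q) * ce (Complex (quat.Re w) s)"
      using rotation by blast
    have "ce (Complex (quat.Re w) s) \<in> ?W" using Wq_rot[OF w qs(1) qs(3)] .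
    then obtain x y z where h: "ce (Complex (quat.Re w) s) = Q3 (of_real a) (of_real b) (of_real c) x y z" "qn x + qn y + qn z = 1"
      unfolding Wq_def by blast
    have i: "Im2 (Q3 (of_real a) (of_real b) (of_real c) x y z) = 0" "Im3 (Q3 (of_real a) (of_real b) (of_real c) x y z) = 0"
      using h(1) by (metis ce_simps(3), metis ce_simps(4))
    have "Complex (quat.Re w) s \<in> WC (of_real a) (of_real b) (of_real c)"
      using link1[OF h(2) i] unfolding h(1)[symmetric] by simp
    then have "Complex (quat.Re w) s \<in> WC (of_real a) (of_real b) (of_real c)"
       "Complex (quat.Re w) (- s) \<in> WC (of_real a) (of_real b) (of_real c)"
      using WC_cnj[of "Complex (quat.Re w) s"] by (auto simp: complex_cnj)
    then show "w \<in> ?S" using qs(2) unfolding Sset_def by auto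
  qed
next
  show "?S \<subseteq> ?W"
  proof
    fix w assume w: "w \<in> ?S"
    obtain q s where qs: "q \<noteq> 0" "s = imn w \<or> s = - imn w" "qcnj q * w * q = of_real (qn q) * ce (Complex (quat.Re w) s)"
      using rotation by blast
    have "Complex (quat.Re w) s \<in> WC (of_real a) (of_real b) (of_real c)"
    proof -
      have "Complex (quat.Re w) (imn w) \<in> WC (of_real a) (of_real b) (of_real c)" using w unfolding Sset_def by simp
      then have "Complex (quat.Re w) (imn w) \<in> WC (of_real a) (of_real b) (of_real c)"
        "Complex (quat.Re w) (- imn w) \<in> WC (of_real a) (of_real b) (of_real c)"
        using WC_cnj[of "Complex (quat.Re w) (imn w)"] by (auto simp: complex_cnj)
      then show ?thesis using qs(2) by auto
    qed
    then have cw: "ce (Complex (quat.Re w) s) \<in> ?W" by (rule link2)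
    have qn0: "qn q \<noteq> 0" using qs(1) qn_zero_iff by simp
    have A: "q * (qcnj q * w * q) * qcnj q = qn q *\<^sub>R (qn q *\<^sub>R w)"
    proof -
      have "q * (qcnj q * w * q) * qcnj q = (q * qcnj q) * w * (q * qcnj q)" by (simp add: mult.assoc)
      then show ?thesis by (simp add: mult_qcnj_self of_real_mult_quat mult_of_real_quat)
    qed
    have B: "q * (qcnj q * w * q) * qcnj q = qn q *\<^sub>R (q * ce (Complex (quat.Re w) s) * qcnj q)"
      unfolding qs(3) by (simp add: of_real_mult_quat)
    have e: "q * ce (Complex (quat.Re w) s) * qcnj q = of_real (qn q) * w"
    proof -
      have "qn q *\<^sub>R (q * ce (Complex (quat.Re w) s) * qcnj q) = qn q *\<^sub>R (qn q *\<^sub>R w)"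
        using A B by metis
      then show ?thesis using qn0 by (simp add: of_real_mult_quat del: scaleR_scaleR)
    qed
    have e2: "qcnj (qcnj q) * ce (Complex (quat.Re w) s) * qcnj q = of_real (qn (qcnj q)) * w"
      using e by simp
    have q0: "qcnj q \<noteq> 0" using qn0 qn_zero_iff qn_qcnj by metis
    show "w \<in> ?W" using Wq_rot[OF cw q0 e2] .
  qed
qed

lemma Wq_real_convex: "convex (Wq (of_real a) (of_real b) (of_real c))"
  unfolding Wq_real_Sset by (intro Sset_convex WC_convex WC_cnj)

definition nz0 :: "quat \<Rightarrow> quat" where
  "nz0 q = (if q = 0 then 1 else (1 / sqrt (qn q)) *\<^sub>R q)"

lemma qn_nz0: "qn (nz0 q) = 1"
proof (cases "q = 0")
  case True then show ?thesis by (simp add: nz0_def qn_def)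
next
  case False
  then have "qn q > 0" using qn_nonneg qn_zero_iff by (metis less_eq_real_def)
  then show ?thesis using False by (simp add: nz0_def qn_scaleR power_divide)
qed

lemma nz0_nonzero: "q \<noteq> 0 \<Longrightarrow> nz0 q = (1 / sqrt (qn q)) *\<^sub>R q" by (simp add: nz0_def)

lemma Reals_scaleR_quat: "(x::quat) \<in> \<real> \<Longrightarrow> s *\<^sub>R x \<in> \<real>"
  by (simp add: quat_Reals_iff)

lemma real_comm: "(r::quat) \<in> \<real> \<Longrightarrow> r * q = q * r"
  by (metis Reals_cases of_real_comm)

lemma nz0_r1: "q * nz0 (qcnj q) \<in> \<real>"
proof (cases "q = 0")
  case True then show ?thesis by simp
next
  case False
  then have "qcnj q \<noteq> 0" by (metis qn_qcnj qn_zero_iff)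
  then have "q * nz0 (qcnj q) = (1 / sqrt (qn q)) *\<^sub>R (q * qcnj q)" by (simp add: nz0_nonzero)
  then show ?thesis by (simp add: mult_qcnj_self Reals_scaleR_quat)
qed

lemma nz0_r2: "qcnj (nz0 p) * p \<in> \<real>"
proof (cases "p = 0")
  case True then show ?thesis by simp
next
  case False
  then have "qcnj (nz0 p) * p = (1 / sqrt (qn p)) *\<^sub>R (qcnj p * p)" by (simp add: nz0_nonzero qcnj_scaleR)
  then show ?thesis by (simp add: qcnj_mult_self Reals_scaleR_quat)
qed

lemma quat_no_zero_divisors: "(x::quat) \<noteq> 0 \<Longrightarrow> y \<noteq> 0 \<Longrightarrow> x * y \<noteq> 0"
  by (metis qn_mult qn_zero_iff mult_eq_0_iff)

lemma diag_exists:
  assumes "qcnj b * a * c \<in> \<real>"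
  shows "\<exists>d1 d2 d3. qn d1 = 1 \<and> qn d2 = 1 \<and> qn d3 = 1 \<and> qcnj d1 * a * d2 \<in> \<real>
     \<and> qcnj d1 * b * d3 \<in> \<real> \<and> qcnj d2 * c * d3 \<in> \<real>"
proof -
  have q1: "qcnj 1 = (1::quat)" by (simp add: quat_eq_iff)
  have n1: "qn 1 = 1" by (simp add: qn_def)
  show ?thesis
  proof (cases "c = 0")
    case True
    show ?thesis
      by (rule exI[of _ 1], rule exI[of _ "nz0 (qcnj a)"], rule exI[of _ "nz0 (qcnj b)"])
         (simp add: q1 n1 qn_nz0 nz0_r1 True)
  next
    case c0: False
    show ?thesis
    proof (cases "a = 0")
      case True
      show ?thesis
        by (rule exI[of _ 1], rule exI[of _ "nz0 (c * nz0 (qcnj b))"], rule exI[of _ "nz0 (qcnj b)"])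
           (simp add: q1 n1 qn_nz0 nz0_r1 nz0_r2 True mult.assoc)
    next
      case a0: False
      define d2 where "d2 = nz0 (qcnj a)"
      define d3 where "d3 = nz0 (qcnj c * d2)"
      have d2z: "d2 \<noteq> 0" using qn_nz0 qn_zero_iff d2_def by (metis one_neq_zero)
      have cq: "qcnj c \<noteq> 0" using c0 by (metis qn_qcnj qn_zero_iff)
      have aq: "qcnj a \<noteq> 0" using a0 by (metis qn_qcnj qn_zero_iff)
      have p0: "qcnj c * d2 \<noteq> 0" using cq d2z quat_no_zero_divisors by blast
      define s where "s = 1 / sqrt (qn (qcnj a))"
      define t where "t = 1 / sqrt (qn (qcnj c * d2))"
      have d2e: "d2 = s *\<^sub>R qcnj a" using aq by (simp add: d2_def s_def nz0_nonzero)
      have d3e: "d3 = t *\<^sub>R (qcnj c * d2)" using p0 by (simp add: d3_def t_def nz0_nonzero)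
      have r1: "qcnj 1 * a * d2 \<in> \<real>" using nz0_r1[of a] by (simp add: q1 d2_def)
      have r3: "qcnj d2 * c * d3 \<in> \<real>"
      proof -
        have "qcnj d2 * c * d3 = t *\<^sub>R (qcnj d2 * (c * qcnj c) * d2)" by (simp add: d3e mult.assoc)
        also have "\<dots> = t *\<^sub>R (qn c *\<^sub>R (qcnj d2 * d2))" by (simp add: mult_qcnj_self mult_of_real_quat)
        finally show ?thesis by (simp add: qcnj_mult_self Reals_scaleR_quat)
      qed
      have r2: "qcnj 1 * b * d3 \<in> \<real>"
      proof (cases "b = 0")
        case True then show ?thesis by simp
      next
        case b0: False
        define P where "P = qcnj b * a * c"
        have "b * P = qn b *\<^sub>R (a * c)"
          by (simp add: P_def mult.assoc[symmetric] mult_qcnj_self of_real_mult_quat)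
        then have ac: "a * c = (1 / qn b) *\<^sub>R (b * P)" using b0 qn_zero_iff by simp
        have "a * c * qcnj b = (1 / qn b) *\<^sub>R (b * P * qcnj b)" by (simp add: ac)
        also have "\<dots> = (1 / qn b) *\<^sub>R (P * (b * qcnj b))"
          using real_comm[OF assms[folded P_def], of b] by (simp add: mult.assoc[symmetric])
        finally have "a * c * qcnj b \<in> \<real>" using assms[folded P_def]
          by (simp add: mult_qcnj_self Reals_scaleR_quat mult_of_real_quat)
        then have "qcnj (a * c * qcnj b) \<in> \<real>" by (simp add: quat_Reals_iff)
        then have "b * qcnj c * qcnj a \<in> \<real>" by (simp add: qcnj_mult mult.assoc)
        moreover have "qcnj 1 * b * d3 = (t * s) *\<^sub>R (b * qcnj c * qcnj a)" by (simp add: q1 d3e d2e mult.assoc)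
        ultimately show ?thesis by (simp add: Reals_scaleR_quat)
      qed
      show ?thesis
        by (rule exI[of _ 1], rule exI[of _ d2], rule exI[of _ d3])
           (simp add: n1 d2_def d3_def qn_nz0 r1[unfolded d2_def] r2[unfolded d3_def d2_def] r3[unfolded d3_def d2_def])
    qed
  qed
qed

lemma if_dir:
  assumes "qcnj b * a * c \<in> \<real>"
  shows "convex (Wq a b c)"
proof -
  obtain d1 d2 d3 where d: "qn d1 = 1" "qn d2 = 1" "qn d3 = 1" "qcnj d1 * a * d2 \<in> \<real>"
     "qcnj d1 * b * d3 \<in> \<real>" "qcnj d2 * c * d3 \<in> \<real>" using diag_exists[OF assms] by blast
  obtain ra rb rc where r: "qcnj d1 * a * d2 = of_real ra" "qcnj d1 * b * d3 = of_real rb" "qcnj d2 * c * d3 = of_real rc"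
    using d(4-6) by (metis Reals_cases)
  have "Wq a b c = Wq (of_real ra) (of_real rb) (of_real rc)" using Wq_diag[OF d(1-3), of a b c] r by simp
  then show ?thesis using Wq_real_convex by simp
qed

type_synonym r4 = "real \<times> real \<times> real \<times> real"

definition tq :: "r4 \<Rightarrow> quat" where
  "tq v = Quat (fst v) (fst (snd v)) (fst (snd (snd v))) (snd (snd (snd v)))"

definition cq :: "('a::topological_space) set \<Rightarrow> ('a \<Rightarrow> quat) \<Rightarrow> bool" where
  "cq S f \<longleftrightarrow> continuous_on S (\<lambda>v. quat.Re (f v)) \<and> continuous_on S (\<lambda>v. Im1 (f v))
     \<and> continuous_on S (\<lambda>v. Im2 (f v)) \<and> continuous_on S (\<lambda>v. Im3 (f v))"

lemma cq_mult: "cq S f \<Longrightarrow> cq S g \<Longrightarrow> cq S (\<lambda>v. f v * g v)"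
  unfolding cq_def by (simp, intro conjI continuous_intros; simp)
lemma cq_add: "cq S f \<Longrightarrow> cq S g \<Longrightarrow> cq S (\<lambda>v. f v + g v)"
  unfolding cq_def by (simp, intro conjI continuous_intros; simp)
lemma cq_cnj: "cq S f \<Longrightarrow> cq S (\<lambda>v. qcnj (f v))"
  unfolding cq_def by (simp, intro conjI continuous_intros; simp)
lemma cq_const: "cq S (\<lambda>v. c)"
  unfolding cq_def by simp
lemma cq_tq: "continuous_on S f \<Longrightarrow> cq S (\<lambda>v. tq (f v))"
  unfolding cq_def tq_def by (simp, intro conjI continuous_intros; simp)

lemma cq_Q3: "cq S f \<Longrightarrow> cq S g \<Longrightarrow> cq S h \<Longrightarrow> cq S (\<lambda>v. Q3 a b c (f v) (g v) (h v))"
  unfolding Q3_def by (intro cq_add cq_mult cq_cnj cq_const; assumption?)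

lemma tq_surj: "tq (quat.Re x, Im1 x, Im2 x, Im3 x) = x"
  by (simp add: tq_def quat_eq_iff)

lemma norm_r4: "(norm (p :: r4))^2 = qn (tq p)"
proof -
  obtain a b c d where p: "p = (a,b,c,d)" by (metis prod_cases4)
  show ?thesis by (simp add: p norm_Pair qn_def tq_def add.assoc)
qed

lemma norm_r4sq: "(norm (v :: r4 \<times> r4 \<times> r4))^2 = qn (tq (fst v)) + qn (tq (fst (snd v))) + qn (tq (snd (snd v)))"
proof -
  obtain p1 p2 p3 where p: "v = (p1,p2,p3)" by (metis prod_cases3)
  show ?thesis by (simp add: p norm_Pair norm_r4[symmetric] add.assoc)
qed

lemma exists_max:
  "\<exists>x y z. qn x + qn y + qn z = 1 \<and> (\<forall>x' y' z'. qn x' + qn y' + qn z' = 1 \<longrightarrow>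
      quat.Re (Q3 a b c x' y' z') \<le> quat.Re (Q3 a b c x y z))"
proof -
  define S where "S = sphere (0 :: r4 \<times> r4 \<times> r4) 1"
  define F where "F = (\<lambda>v :: r4 \<times> r4 \<times> r4. quat.Re (Q3 a b c (tq (fst v)) (tq (fst (snd v))) (tq (snd (snd v)))))"
  have memS: "v \<in> S \<longleftrightarrow> qn (tq (fst v)) + qn (tq (fst (snd v))) + qn (tq (snd (snd v))) = 1" for v
  proof -
    have "v \<in> S \<longleftrightarrow> norm v = 1" by (simp add: S_def)
    also have "\<dots> \<longleftrightarrow> (norm v)^2 = 1" using norm_ge_zero[of v] by (smt (verit) power2_eq_1_iff)
    finally show ?thesis by (simp add: norm_r4sq)
  qed
  have "cq S (\<lambda>v. Q3 a b c (tq (fst v)) (tq (fst (snd v))) (tq (snd (snd v))))"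
    by (intro cq_Q3 cq_tq continuous_intros)
  then have cont: "continuous_on S F" unfolding cq_def F_def by simp
  have ne: "S \<noteq> {}"
  proof -
    have "((1,0,0,0), (0,0,0,0), (0,0,0,0)) \<in> S" unfolding memS by (simp add: tq_def qn_def)
    then show ?thesis by blast
  qed
  obtain v where v: "v \<in> S" "\<forall>u\<in>S. F u \<le> F v"
    using continuous_attains_sup[OF _ ne cont] S_def compact_sphere by blast
  show ?thesis
  proof (intro exI conjI allI impI)
    show "qn (tq (fst v)) + qn (tq (fst (snd v))) + qn (tq (snd (snd v))) = 1" using v(1) memS by blast
  next
    fix x' y' z' assume h: "qn x' + qn y' + qn z' = 1"
    define u where "u = ((quat.Re x', Im1 x', Im2 x', Im3 x'), (quat.Re y', Im1 y', Im2 y', Im3 y'), (quat.Re z', Im1 z', Im2 z', Im3 z'))"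
    have "u \<in> S" unfolding memS using h by (simp add: u_def tq_surj)
    then have "F u \<le> F v" using v(2) by blast
    then show "quat.Re (Q3 a b c x' y' z') \<le> quat.Re (Q3 a b c (tq (fst v)) (tq (fst (snd v))) (tq (snd (snd v))))"
      by (simp add: F_def u_def tq_surj)
  qed
qed

lemma qcnj_Reals: "(x::quat) \<in> \<real> \<Longrightarrow> qcnj x \<in> \<real>"
  by (simp add: quat_Reals_iff)

lemma Re_qcnj: "quat.Re (qcnj p) = quat.Re p" by simp

lemma Q3_pert: "Q3 a b c (x + t *\<^sub>R u) (y + t *\<^sub>R v) (z + t *\<^sub>R w) = Q3 a b c x y z
   + t *\<^sub>R (qcnj x * a * v + qcnj u * a * y + qcnj x * b * w + qcnj u * b * z + qcnj y * c * w + qcnj v * c * z)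
   + (t^2) *\<^sub>R Q3 a b c u v w"
  by (simp add: Q3_def qcnj_add qcnj_scaleR algebra_simps power2_eq_square)

lemma Re_swap: "quat.Re (qcnj x * a * v) = quat.Re (qcnj v * (qcnj a * x))"
  by (simp add: algebra_simps)

lemma qn_pert: "qn (x + t *\<^sub>R u) = qn x + 2 * t * quat.Re (qcnj u * x) + t^2 * qn u"
  by (simp add: qn_def algebra_simps power2_eq_square)

lemma Re_gg: "quat.Re (qcnj g * (g + of_real r * x)) = qn g + r * quat.Re (qcnj g * x)"
  by (simp add: qn_def algebra_simps power2_eq_square)

lemma quad_zero:
  fixes S R :: real
  assumes "\<And>t. t * S + t^2 * R \<le> 0" "S \<ge> 0"
  shows "S = 0"
proof (rule ccontr)
  assume "S \<noteq> 0"
  then have S: "S > 0" using assms(2) by simp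
  define t where "t = S / (2 * (\<bar>R\<bar> + 1))"
  have t: "t > 0" using S by (simp add: t_def)
  have "t * (S + t * R) \<le> 0" using assms(1)[of t] by (simp add: algebra_simps power2_eq_square)
  then have "S + t * R \<le> 0" using t by (simp add: mult_le_0_iff)
  moreover have "t * R \<ge> - (t * \<bar>R\<bar>)"
  proof -
    have "t * (- \<bar>R\<bar>) \<le> t * R" using t by (intro mult_left_mono) auto
    then show ?thesis by simp
  qed
  moreover have "t * \<bar>R\<bar> \<le> S / 2"
  proof -
    have "t * \<bar>R\<bar> = S * (\<bar>R\<bar> / (2 * (\<bar>R\<bar> + 1)))" by (simp add: t_def)
    also have "\<dots> \<le> S * (1/2)" using S by (intro mult_left_mono) (simp_all add: field_simps)
    finally show ?thesis by simp
  qed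
  ultimately show False using S by linarith
qed

lemma arith1:
  fixes R1 A B C l t q1 q2 q3 r1 r2 r3 n1 n2 n3 N1 :: real
  assumes "R1 = A + t * B + t^2 * C" "A = l" "B = (q1 + 2 * l * r1) + (q2 + 2 * l * r2) + (q3 + 2 * l * r3)"
    "N1 = (n1 + 2 * t * r1 + t^2 * q1) + (n2 + 2 * t * r2 + t^2 * q2) + (n3 + 2 * t * r3 + t^2 * q3)"
    "n1 + n2 + n3 = 1" "R1 \<le> l * N1"
  shows "t * (q1 + q2 + q3) + t^2 * (C - l * (q1 + q2 + q3)) \<le> 0"
proof -
  have "R1 - l * N1 = t * (q1 + q2 + q3) + t^2 * (C - l * (q1 + q2 + q3)) + l * (1 - (n1 + n2 + n3))"
    using assms(1-4) by (simp add: algebra_simps)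
  then show ?thesis using assms(5,6) by simp
qed

lemma pert:
  assumes N: "qn x + qn y + qn z = 1" and V: "Q3 a b c x y z = of_real l"
    and B: "\<And>x' y' z'. quat.Re (Q3 a b c x' y' z') \<le> l * (qn x' + qn y' + qn z')"
  shows "a * y + b * z = of_real (2 * l) * x" "qcnj a * x + c * z = of_real (2 * l) * y"
    "qcnj b * x + qcnj c * y = of_real (2 * l) * z"
proof -
  define m :: quat where "m = of_real (2 * l)"
  define g1 where "g1 = a * y + b * z - m * x"
  define g2 where "g2 = qcnj a * x + c * z - m * y"
  define g3 where "g3 = qcnj b * x + qcnj c * y - m * z"
  define S where "S = qn g1 + qn g2 + qn g3"
  define R where "R = quat.Re (Q3 a b c g1 g2 g3) - l * (qn g1 + qn g2 + qn g3)"
  have key: "t * S + t^2 * R \<le> 0" for t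
  proof -
    have b: "quat.Re (Q3 a b c (x + t *\<^sub>R g1) (y + t *\<^sub>R g2) (z + t *\<^sub>R g3))
        \<le> l * (qn (x + t *\<^sub>R g1) + qn (y + t *\<^sub>R g2) + qn (z + t *\<^sub>R g3))" by (rule B)
    have c1: "quat.Re (qcnj x * a * g2 + qcnj g1 * a * y + qcnj x * b * g3 + qcnj g1 * b * z + qcnj y * c * g3 + qcnj g2 * c * z)
      = quat.Re (qcnj g1 * (g1 + m * x)) + quat.Re (qcnj g2 * (g2 + m * y)) + quat.Re (qcnj g3 * (g3 + m * z))"
    proof -
      have "quat.Re (qcnj x * a * g2 + qcnj g1 * a * y + qcnj x * b * g3 + qcnj g1 * b * z + qcnj y * c * g3 + qcnj g2 * c * z)
         = quat.Re (qcnj g2 * (qcnj a * x)) + quat.Re (qcnj g1 * a * y) + quat.Re (qcnj g3 * (qcnj b * x)) + quat.Re (qcnj g1 * b * z)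
           + quat.Re (qcnj g3 * (qcnj c * y)) + quat.Re (qcnj g2 * c * z)"
        by (simp only: plus_quat.sel Re_swap)
      also have "\<dots> = quat.Re (qcnj g1 * (a * y + b * z)) + quat.Re (qcnj g2 * (qcnj a * x + c * z)) + quat.Re (qcnj g3 * (qcnj b * x + qcnj c * y))"
        by (simp add: distrib_left mult.assoc)
      finally show ?thesis by (simp add: g1_def g2_def g3_def)
    qed
    have e1: "quat.Re (Q3 a b c (x + t *\<^sub>R g1) (y + t *\<^sub>R g2) (z + t *\<^sub>R g3)) = quat.Re (Q3 a b c x y z)
       + t * quat.Re (qcnj x * a * g2 + qcnj g1 * a * y + qcnj x * b * g3 + qcnj g1 * b * z + qcnj y * c * g3 + qcnj g2 * c * z)
       + t^2 * quat.Re (Q3 a b c g1 g2 g3)"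
      by (simp only: Q3_pert plus_quat.sel scaleR_quat.sel)
    have e2: "quat.Re (qcnj x * a * g2 + qcnj g1 * a * y + qcnj x * b * g3 + qcnj g1 * b * z + qcnj y * c * g3 + qcnj g2 * c * z)
       = (qn g1 + 2 * l * quat.Re (qcnj g1 * x)) + (qn g2 + 2 * l * quat.Re (qcnj g2 * y)) + (qn g3 + 2 * l * quat.Re (qcnj g3 * z))"
      using c1 by (simp only: m_def Re_gg)
    have e3: "qn (x + t *\<^sub>R g1) + qn (y + t *\<^sub>R g2) + qn (z + t *\<^sub>R g3) =
       (qn x + 2 * t * quat.Re (qcnj g1 * x) + t^2 * qn g1) + (qn y + 2 * t * quat.Re (qcnj g2 * y) + t^2 * qn g2)
       + (qn z + 2 * t * quat.Re (qcnj g3 * z) + t^2 * qn g3)"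
      by (simp only: qn_pert)
    have e0: "quat.Re (Q3 a b c x y z) = l" using V by simp
    show ?thesis unfolding S_def R_def
      by (rule arith1[OF e1 e0 e2 e3 N b])
  qed
  have "S = 0" using quad_zero[OF key] by (simp add: S_def qn_nonneg)
  then have "qn g1 = 0" "qn g2 = 0" "qn g3 = 0" using qn_nonneg[of g1] qn_nonneg[of g2] qn_nonneg[of g3] by (simp_all add: S_def)
  then have "g1 = 0" "g2 = 0" "g3 = 0" using qn_zero_iff by auto
  then show "a * y + b * z = of_real (2 * l) * x" "qcnj a * x + c * z = of_real (2 * l) * y"
    "qcnj b * x + qcnj c * y = of_real (2 * l) * z" by (simp_all add: g1_def g2_def g3_def m_def)
qed

lemma mult_qcnj_assoc: "x * (qcnj x * R) = qn x *\<^sub>R R"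
  by (simp add: mult.assoc[symmetric] mult_qcnj_self of_real_mult_quat)

lemma zero_div: "u * v = 0 \<Longrightarrow> v \<noteq> (0::quat) \<Longrightarrow> u = 0"
  using quat_no_zero_divisors by blast

lemma Reals_scaleR_inv: "k *\<^sub>R (x::quat) \<in> \<real> \<Longrightarrow> k \<noteq> 0 \<Longrightarrow> x \<in> \<real>"
  using Reals_scaleR_quat[of "k *\<^sub>R x" "1/k"] by simp

lemma alg:
  assumes E1: "a * y + b * z = m * x" and E2: "qcnj a * x + c * z = m * y"
    and E3: "qcnj b * x + qcnj c * y = m * z" and m: "m \<in> \<real>"
    and V: "Q3 a b c x y z \<in> \<real>" and N: "qn x + qn y + qn z = 1"
  shows "qcnj b * a * c \<in> \<real>"
proof -
  have mc: "m * u = u * m" for u using real_comm[OF m] .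
  have qm: "qcnj m = m" using m by (metis Reals_cases qcnj_of_real)
  define p where "p = qcnj x * a * y"
  define q where "q = qcnj y * c * z"
  define r where "r = qcnj x * b * z"
  have h1: "p + r \<in> \<real>"
  proof -
    have "p + r = qcnj x * (a * y + b * z)" by (simp add: p_def r_def distrib_left mult.assoc)
    also have "\<dots> = qcnj x * (m * x)" using E1 by simp
    also have "\<dots> = (qcnj x * m) * x" by (simp add: mult.assoc)
    also have "\<dots> = (m * qcnj x) * x" using mc by simp
    also have "\<dots> = m * (qcnj x * x)" by (simp add: mult.assoc)
    finally show ?thesis using m by (simp add: qcnj_mult_self)
  qed
  have h2: "p + r + q \<in> \<real>" using V by (simp add: Q3_def p_def q_def r_def)
  have hq: "q \<in> \<real>" using Reals_diff[OF h2 h1] by simp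
  have h3: "r + q \<in> \<real>"
  proof -
    have "r + q = qcnj (qcnj b * x + qcnj c * y) * z" by (simp add: r_def q_def qcnj_add qcnj_mult distrib_right mult.assoc)
    also have "\<dots> = qcnj z * m * z" using E3 qm by (simp add: qcnj_mult)
    also have "\<dots> = m * (qcnj z * z)" using mc by (simp add: mult.assoc[symmetric])
    finally show ?thesis using m by (simp add: qcnj_mult_self)
  qed
  have hp: "p \<in> \<real>" using Reals_diff[OF h2 h3] by (simp add: add.assoc)
  have hr: "r \<in> \<real>" using Reals_diff[OF h1 hp] by simp
  define P where "P = qcnj b * a * c"
  show ?thesis
  proof (cases "x = 0")
    case x0: True
    have e1: "a * y + b * z = 0" using E1 x0 by simp
    have e2: "c * z = m * y" using E2 x0 by simp
    show ?thesis
    proof (cases "z = 0")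
      case True
      then have "y \<noteq> 0" using N x0 by (auto simp: qn_def)
      moreover have "a * y = 0" using e1 True by simp
      ultimately have "a = 0" using zero_div by blast
      then show ?thesis by simp
    next
      case False
      have "(a * c + m * b) * z = m * (a * y + b * z)"
        using e2 mc by (simp add: distrib_right distrib_left mult.assoc)
      then have "(a * c + m * b) * z = 0" using e1 by simp
      then have "a * c + m * b = 0" using False zero_div by blast
      then have "a * c = - (m * b)" by (simp add: eq_neg_iff_add_eq_0)
      then have "P = - (m * (qcnj b * b))" by (simp add: P_def mult.assoc mc)
      then show ?thesis using m by (simp add: P_def qcnj_mult_self)
    qed
  next
    case x0: False
    show ?thesis
    proof (cases "y = 0")
      case y0: True
      have e2: "qcnj a * x + c * z = 0" using E2 y0 by simp
      have e1: "b * z = m * x" using E1 y0 by simp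
      show ?thesis
      proof (cases "z = 0")
        case True
        then have "qcnj a * x = 0" using e2 by simp
        then have "qcnj a = 0" using x0 zero_div by blast
        then have "a = 0" by (metis qcnj_qcnj qn_qcnj qn_zero_iff)
        then show ?thesis by simp
      next
        case False
        have "(qcnj a * b + m * c) * z = m * (qcnj a * x + c * z)"
          using e1 mc by (simp add: distrib_right distrib_left mult.assoc)
        then have "(qcnj a * b + m * c) * z = 0" using e2 by simp
        then have "qcnj a * b + m * c = 0" using False zero_div by blast
        then have "qcnj a * b = - (m * c)" by (simp add: eq_neg_iff_add_eq_0)
        then have "qcnj (qcnj a * b) = qcnj (- (m * c))" by simp
        then have "qcnj b * a = - (qcnj c * qcnj m)" by (simp add: qcnj_mult quat_eq_iff)
        then have "P = - (qcnj m * (qcnj c * c))"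
          using real_comm[OF qcnj_Reals[OF m]] by (simp add: P_def mult.assoc)
        then show ?thesis using m qcnj_Reals[OF m] by (simp add: P_def qcnj_mult_self)
      qed
    next
      case y0: False
      show ?thesis
      proof (cases "z = 0")
        case z0: True
        have e3: "qcnj b * x + qcnj c * y = 0" using E3 z0 by simp
        have e1: "a * y = m * x" using E1 z0 by simp
        have "(qcnj b * a + m * qcnj c) * y = m * (qcnj b * x + qcnj c * y)"
          using e1 mc by (simp add: distrib_right distrib_left mult.assoc)
        then have "(qcnj b * a + m * qcnj c) * y = 0" using e3 by simp
        then have "qcnj b * a + m * qcnj c = 0" using y0 zero_div by blast
        then have "qcnj b * a = - (m * qcnj c)" by (simp add: eq_neg_iff_add_eq_0)
        then have "P = - (m * (qcnj c * c))" by (simp add: P_def mult.assoc)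
        then show ?thesis using m by (simp add: P_def qcnj_mult_self)
      next
        case z0: False
        have "qcnj r * p * q \<in> \<real>" using hp hq qcnj_Reals[OF hr] by (simp add: Reals_mult)
        moreover have "qcnj r * p * q = (qn x * qn y) *\<^sub>R (qcnj z * P * z)"
          by (simp add: r_def p_def q_def P_def qcnj_mult mult.assoc mult_qcnj_assoc)
        ultimately have "(qn x * qn y) *\<^sub>R (qcnj z * P * z) \<in> \<real>" by simp
        moreover have "qn x * qn y \<noteq> 0" using x0 y0 qn_zero_iff by simp
        ultimately have T: "qcnj z * P * z \<in> \<real>" using Reals_scaleR_inv by blast
        have "z * (qcnj z * P * z) * qcnj z = (qn z * qn z) *\<^sub>R P"
          by (simp add: mult.assoc mult_qcnj_assoc mult_qcnj_self mult_of_real_quat)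
        moreover have "z * (qcnj z * P * z) * qcnj z = (qcnj z * P * z) * (z * qcnj z)"
          by (metis real_comm[OF T] mult.assoc)
        ultimately have "(qn z * qn z) *\<^sub>R P = (qcnj z * P * z) * of_real (qn z)" by (metis mult_qcnj_self)
        then have "(qn z * qn z) *\<^sub>R P \<in> \<real>" using T by (metis Reals_mult Reals_of_real)
        moreover have "qn z * qn z \<noteq> 0" using z0 qn_zero_iff by simp
        ultimately show ?thesis using Reals_scaleR_inv unfolding P_def by blast
      qed
    qed
  qed
qed

lemma Wq_bound:
  assumes M: "\<And>x' y' z'. qn x' + qn y' + qn z' = 1 \<Longrightarrow> quat.Re (Q3 a b c x' y' z') \<le> l"
  shows "quat.Re (Q3 a b c x y z) \<le> l * (qn x + qn y + qn z)"
proof (cases "qn x + qn y + qn z = 0")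
  case True
  then have "x = 0" "y = 0" "z = 0" using qn_nonneg qn_zero_iff add_nonneg_eq_0_iff
    by (metis add_nonneg_nonneg)+
  then show ?thesis by (simp add: Q3_def qn_def)
next
  case False
  define N where "N = qn x + qn y + qn z"
  have Np: "N > 0" unfolding N_def using False qn_nonneg[of x] qn_nonneg[of y] qn_nonneg[of z] by linarith
  define k where "k = 1 / sqrt N"
  have k2: "k^2 * N = 1" using Np by (simp add: k_def power_divide)
  have "qn (k *\<^sub>R x) + qn (k *\<^sub>R y) + qn (k *\<^sub>R z) = 1" using k2 by (simp add: qn_scaleR N_def algebra_simps)
  then have "quat.Re (Q3 a b c (k *\<^sub>R x) (k *\<^sub>R y) (k *\<^sub>R z)) \<le> l" by (rule M)
  then have "k^2 * quat.Re (Q3 a b c x y z) \<le> l" by (simp add: Q3_scaleR)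
  then have "N * (k^2 * quat.Re (Q3 a b c x y z)) \<le> N * l" using Np by (simp add: mult_left_mono)
  moreover have "N * (k^2 * quat.Re (Q3 a b c x y z)) = quat.Re (Q3 a b c x y z)"
    by (metis k2 mult.assoc mult.commute mult_1_left)
  ultimately have "quat.Re (Q3 a b c x y z) \<le> N * l" by linarith
  then show ?thesis by (simp add: N_def mult.commute)
qed

lemma only_if_dir:
  assumes C: "convex (Wq a b c)"
  shows "qcnj b * a * c \<in> \<real>"
proof -
  obtain x0 y0 z0 where n0: "qn x0 + qn y0 + qn z0 = 1"
    and mx: "\<forall>x' y' z'. qn x' + qn y' + qn z' = 1 \<longrightarrow> quat.Re (Q3 a b c x' y' z') \<le> quat.Re (Q3 a b c x0 y0 z0)"
    using exists_max by blast
  define l where "l = quat.Re (Q3 a b c x0 y0 z0)"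
  have w0: "Q3 a b c x0 y0 z0 \<in> Wq a b c" using n0 unfolding Wq_def by blast
  obtain q s where qs: "q \<noteq> 0" "qcnj q * Q3 a b c x0 y0 z0 * q = of_real (qn q) * ce (Complex l s)"
    using rotation[of "Q3 a b c x0 y0 z0"] unfolding l_def by blast
  have w1: "ce (Complex l s) \<in> Wq a b c" using Wq_rot[OF w0 qs] .
  have j0: "Quat 0 0 1 0 \<noteq> 0" by (simp add: quat_eq_iff)
  have w2: "ce (Complex l (- s)) \<in> Wq a b c" using Wq_rot[OF w1 j0 jrot] .
  have "(1/2::real) *\<^sub>R ce (Complex l s) + (1/2::real) *\<^sub>R ce (Complex l (- s)) \<in> Wq a b c"
    using convexD[OF C w1 w2] by simp
  moreover have "(1/2::real) *\<^sub>R ce (Complex l s) + (1/2::real) *\<^sub>R ce (Complex l (- s)) = of_real l"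
    by (simp add: quat_eq_iff)
  ultimately have "of_real l \<in> Wq a b c" by simp
  then obtain x y z where h: "of_real l = Q3 a b c x y z" "qn x + qn y + qn z = 1" unfolding Wq_def by blast
  have B: "quat.Re (Q3 a b c x' y' z') \<le> l * (qn x' + qn y' + qn z')" for x' y' z'
    by (rule Wq_bound) (use mx l_def in auto)
  note E = pert[OF h(2) h(1)[symmetric] B]
  have m: "(of_real (2 * l) :: quat) \<in> \<real>" by simp
  have v: "Q3 a b c x y z \<in> \<real>" using h(1) by (metis Reals_of_real)
  show ?thesis by (rule alg[OF E(1) E(2) E(3) m v h(2)])
qed

theorem theorem5p3:
  fixes A :: "nat \<Rightarrow> nat \<Rightarrow> quat"
  assumes "strictly_upper_triangular3 A"
  shows "convex (numrange3 A) \<longleftrightarrow> qcnj (A 1 3) * A 1 2 * A 2 3 \<in> \<real>"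
  unfolding numrange3_Wq[OF assms] using if_dir only_if_dir by blast

end
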